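(* Let $G$ be a connected graph of order $n\ge 2$. (a) If $O_{\rm SR}(G)=\mathcal{M}$, then $\textnormal{sdim}(G)\le\lfloor n/2\rfloor$. (b) If $\textnormal{sdim}(G)\ge\lceil n/2\rceil+1$, then $O_{\rm SR}(G)=\mathcal{B}$.
   Context: All graphs are finite, simple and undirected. A set $S\subseteq V(G)$ is a strong resolving set of a connected graph $G$ if for all distinct $x,y\in V(G)$ there exists $z\in S$ such that $x$ lies on a $y$–$z$ geodesic or $y$ lies on an $x$–$z$ geodesic; $\textnormal{sdim}(G)$ is the minimum cardinality of a strong resolving set. The Maker–Breaker strong resolving game on $G$: Maker and Breaker alternately select a not-yet-chosen vertex of $G$; Maker wins if the vertices he selects contain a strong resolving set of $G$, Breaker wins otherwise. In the M-game Maker moves first, in the B-game Breaker moves first. $O_{\rm SR}(G)=\mathcal{M}$ if Maker has a winning strategy in both games, $\mathcal{B}$ if Breaker has a winning strategy in both, and $\mathcal{N}$ if the first player has a winning strategy in each. *)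

theory Defs
  imports Complex_Main
begin

definition graph :: "'a set \<Rightarrow> ('a \<Rightarrow> 'a \<Rightarrow> bool) \<Rightarrow> bool" where
  "graph V E \<longleftrightarrow> finite V \<and> (\<forall>x y. E x y \<longrightarrow> x \<in> V \<and> y \<in> V)
     \<and> (\<forall>x y. E x y \<longrightarrow> E y x) \<and> (\<forall>x. \<not> E x x)"

definition walk :: "'a set \<Rightarrow> ('a \<Rightarrow> 'a \<Rightarrow> bool) \<Rightarrow> 'a list \<Rightarrow> bool" where
  "walk V E xs \<longleftrightarrow> xs \<noteq> [] \<and> set xs \<subseteq> V \<and> (\<forall>i. Suc i < length xs \<longrightarrow> E (xs ! i) (xs ! Suc i))"

definition walk_between :: "'a set \<Rightarrow> ('a \<Rightarrow> 'a \<Rightarrow> bool) \<Rightarrow> 'a \<Rightarrow> 'a \<Rightarrow> 'a list \<Rightarrow> bool" where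
  "walk_between V E x y xs \<longleftrightarrow> walk V E xs \<and> hd xs = x \<and> last xs = y"

definition connected_graph :: "'a set \<Rightarrow> ('a \<Rightarrow> 'a \<Rightarrow> bool) \<Rightarrow> bool" where
  "connected_graph V E \<longleftrightarrow> graph V E \<and> V \<noteq> {} \<and> (\<forall>x\<in>V. \<forall>y\<in>V. \<exists>xs. walk_between V E x y xs)"

definition gdist :: "'a set \<Rightarrow> ('a \<Rightarrow> 'a \<Rightarrow> bool) \<Rightarrow> 'a \<Rightarrow> 'a \<Rightarrow> nat" where
  "gdist V E x y = (LEAST n. \<exists>xs. walk_between V E x y xs \<and> length xs = Suc n)"

definition geodesic :: "'a set \<Rightarrow> ('a \<Rightarrow> 'a \<Rightarrow> bool) \<Rightarrow> 'a \<Rightarrow> 'a \<Rightarrow> 'a list \<Rightarrow> bool" where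
  "geodesic V E y z xs \<longleftrightarrow> walk_between V E y z xs \<and> length xs = Suc (gdist V E y z)"

definition on_geodesic :: "'a set \<Rightarrow> ('a \<Rightarrow> 'a \<Rightarrow> bool) \<Rightarrow> 'a \<Rightarrow> 'a \<Rightarrow> 'a \<Rightarrow> bool" where
  "on_geodesic V E x y z \<longleftrightarrow> (\<exists>xs. geodesic V E y z xs \<and> x \<in> set xs)"

definition strong_resolving :: "'a set \<Rightarrow> ('a \<Rightarrow> 'a \<Rightarrow> bool) \<Rightarrow> 'a set \<Rightarrow> bool" where
  "strong_resolving V E S \<longleftrightarrow> S \<subseteq> V \<and>
     (\<forall>x\<in>V. \<forall>y\<in>V. x \<noteq> y \<longrightarrow> (\<exists>z\<in>S. on_geodesic V E x y z \<or> on_geodesic V E y x z))"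

definition sdim :: "'a set \<Rightarrow> ('a \<Rightarrow> 'a \<Rightarrow> bool) \<Rightarrow> nat" where
  "sdim V E = Min (card ` {S. strong_resolving V E S})"

definition contains_srs :: "'a set \<Rightarrow> ('a \<Rightarrow> 'a \<Rightarrow> bool) \<Rightarrow> 'a set \<Rightarrow> bool" where
  "contains_srs V E M \<longleftrightarrow> (\<exists>S\<subseteq>M. strong_resolving V E S)"

text \<open>Position: Maker's vertices M, Breaker's
  vertices B; the Boolean flag says whether it is Maker's turn.
  maker_wins t M B: Maker has a winning strategy from this position.\<close>
inductive maker_wins :: "'a set \<Rightarrow> ('a \<Rightarrow> 'a \<Rightarrow> bool) \<Rightarrow> bool \<Rightarrow> 'a set \<Rightarrow> 'a set \<Rightarrow> bool"
  for V E where
  has_srs: "contains_srs V E M \<Longrightarrow> maker_wins V E t M B"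
| maker_move: "v \<in> V - M - B \<Longrightarrow> maker_wins V E False (insert v M) B \<Longrightarrow> maker_wins V E True M B"
| breaker_move: "V - M - B \<noteq> {} \<Longrightarrow> (\<forall>v\<in>V - M - B. maker_wins V E True M (insert v B))
     \<Longrightarrow> maker_wins V E False M B"

inductive breaker_wins :: "'a set \<Rightarrow> ('a \<Rightarrow> 'a \<Rightarrow> bool) \<Rightarrow> bool \<Rightarrow> 'a set \<Rightarrow> 'a set \<Rightarrow> bool"
  for V E where
  game_over: "V - M - B = {} \<Longrightarrow> \<not> contains_srs V E M \<Longrightarrow> breaker_wins V E t M B"
| breaker_move: "v \<in> V - M - B \<Longrightarrow> breaker_wins V E True M (insert v B) \<Longrightarrow> breaker_wins V E False M B"
| maker_move: "V - M - B \<noteq> {} \<Longrightarrow> (\<forall>v\<in>V - M - B. breaker_wins V E False (insert v M) B)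
     \<Longrightarrow> breaker_wins V E True M B"

definition outcome_M :: "'a set \<Rightarrow> ('a \<Rightarrow> 'a \<Rightarrow> bool) \<Rightarrow> bool" where
  "outcome_M V E \<longleftrightarrow> maker_wins V E True {} {} \<and> maker_wins V E False {} {}"

definition outcome_B :: "'a set \<Rightarrow> ('a \<Rightarrow> 'a \<Rightarrow> bool) \<Rightarrow> bool" where
  "outcome_B V E \<longleftrightarrow> breaker_wins V E True {} {} \<and> breaker_wins V E False {} {}"

end

theory Submission
  imports Defs
begin

lemma sdim_le:
  assumes "finite V" "strong_resolving V E S"
  shows "sdim V E \<le> card S"
proof -
  have "{S. strong_resolving V E S} \<subseteq> Pow V" by (auto simp: strong_resolving_def)
  hence "finite {S. strong_resolving V E S}" using assms(1) finite_subset by blast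
  thus ?thesis unfolding sdim_def using assms(2) by (intro Min_le) auto
qed

lemma maker_inv:
  "maker_wins V E t M B \<Longrightarrow> finite V \<Longrightarrow> M \<subseteq> V \<Longrightarrow> B \<subseteq> V \<Longrightarrow> M \<inter> B = {} \<Longrightarrow>
    (t \<longrightarrow> card B = card M + 1) \<Longrightarrow> (\<not> t \<longrightarrow> card M = card B) \<Longrightarrow>
    \<exists>S. strong_resolving V E S \<and> 2 * card S \<le> card V"
proof (induction rule: maker_wins.induct)
  case (has_srs M t B)
  obtain S where S: "S \<subseteq> M" "strong_resolving V E S" using has_srs.hyps by (auto simp: contains_srs_def)
  have fM: "finite M" using has_srs.prems(1,2) by (rule finite_subset[rotated])
  have fB: "finite B" using has_srs.prems(1,3) by (rule finite_subset[rotated])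
  have "card S \<le> card M" using S(1) fM by (rule card_mono[rotated])
  moreover have "card (M \<union> B) = card M + card B" using fM fB has_srs.prems(4) by (rule card_Un_disjoint)
  moreover have "card (M \<union> B) \<le> card V" using has_srs.prems(1,2,3) by (simp add: card_mono)
  ultimately show ?case using S has_srs.prems(5,6) by (cases t) auto
next
  case (maker_move v M B)
  have fM: "finite M" using maker_move.prems(1,2) by (rule finite_subset[rotated])
  have vM: "v \<notin> M" "v \<in> V" "v \<notin> B" using maker_move.hyps(1) by auto
  hence c: "card (insert v M) = card B" using fM maker_move.prems(5) by simp
  have "insert v M \<subseteq> V" using vM(2) maker_move.prems(2) by simp
  moreover have "insert v M \<inter> B = {}" using vM(3) maker_move.prems(4) by simp
  ultimately show ?case using maker_move.IH maker_move.prems(1,3) c by simp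
next
  case (breaker_move M B)
  obtain v where v: "v \<in> V - M - B" using breaker_move.hyps(1) by blast
  have fB: "finite B" using breaker_move.prems(1,3) by (rule finite_subset[rotated])
  have vM: "v \<notin> M" "v \<in> V" "v \<notin> B" using v by auto
  hence c: "card (insert v B) = card M + 1" using fB breaker_move.prems(6) by simp
  have IH: "finite V \<Longrightarrow> M \<subseteq> V \<Longrightarrow> insert v B \<subseteq> V \<Longrightarrow> M \<inter> insert v B = {} \<Longrightarrow>
    (True \<longrightarrow> card (insert v B) = card M + 1) \<Longrightarrow> (\<not> True \<longrightarrow> card M = card (insert v B)) \<Longrightarrow>
    \<exists>S. strong_resolving V E S \<and> 2 * card S \<le> card V"
    using breaker_move.IH v by blast
  have "insert v B \<subseteq> V" using vM(2) breaker_move.prems(3) by simp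
  moreover have "M \<inter> insert v B = {}" using vM(1) breaker_move.prems(4) by simp
  ultimately show ?case using IH breaker_move.prems(1,2) c by simp
qed

lemma breaker_inv:
  "finite V \<Longrightarrow> M \<subseteq> V \<Longrightarrow> B \<subseteq> V \<Longrightarrow> M \<inter> B = {} \<Longrightarrow> card (V - M - B) = k \<Longrightarrow>
   card M + (if t then (k+1) div 2 else k div 2) < sdim V E \<Longrightarrow> breaker_wins V E t M B"
proof (induction k arbitrary: t M B)
  case 0
  have fM: "finite M" using 0 finite_subset by auto
  have e: "V - M - B = {}" using 0 by (simp add: finite_subset)
  have "\<not> contains_srs V E M"
  proof
    assume "contains_srs V E M"
    then obtain S where S: "S \<subseteq> M" "strong_resolving V E S" by (auto simp: contains_srs_def)
    have "card S \<le> card M" using S fM card_mono by blast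
    moreover have "sdim V E \<le> card S" using sdim_le 0 S by blast
    ultimately show False using 0 by simp
  qed
  thus ?case by (rule breaker_wins.game_over[OF e])
next
  case (Suc k)
  have fM: "finite M" "finite B" using Suc.prems(1,2,3) by (auto intro: finite_subset)
  have ne: "V - M - B \<noteq> {}" by (metis Suc.prems(5) card.empty nat.distinct(1))
  have fin: "finite (V - M - B)" using Suc.prems(1) by simp
  show ?case
  proof (cases t)
    case True
    have "breaker_wins V E True M B"
    proof (rule breaker_wins.maker_move[OF ne], intro ballI)
      fix v assume v: "v \<in> V - M - B"
      have c: "card (insert v M) = card M + 1" using v fM by simp
      have eq: "V - insert v M - B = (V - M - B) - {v}" by auto
      have "card (V - insert v M - B) = k" unfolding eq using v Suc.prems(5) fin by simp
      moreover have "insert v M \<subseteq> V" "insert v M \<inter> B = {}" using v Suc.prems by auto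
      moreover have "card (insert v M) + (k div 2) < sdim V E" using c Suc.prems(6) True by simp
      ultimately show "breaker_wins V E False (insert v M) B"
        using Suc.IH[of "insert v M" B False] Suc.prems(1,3) by simp
    qed
    thus ?thesis using True by simp
  next
    case False
    then obtain v where v: "v \<in> V - M - B" using ne by blast
    have eq: "V - M - insert v B = (V - M - B) - {v}" by auto
    have "card (V - M - insert v B) = k" unfolding eq using v Suc.prems(5) fin by simp
    moreover have "insert v B \<subseteq> V" "M \<inter> insert v B = {}" using v Suc.prems by auto
    moreover have "card M + ((k + 1) div 2) < sdim V E" using Suc.prems(6) False by simp
    ultimately have "breaker_wins V E True M (insert v B)"
      using Suc.IH[of M "insert v B" True] Suc.prems(1,2) by simp
    hence "breaker_wins V E False M B" using v by (rule breaker_wins.breaker_move[rotated])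
    thus ?thesis using False by simp
  qed
qed

theorem mainTheorem7:
  fixes V :: "'a set" and E :: "'a \<Rightarrow> 'a \<Rightarrow> bool"
  assumes "connected_graph V E" and "card V \<ge> 2"
  shows "(outcome_M V E \<longrightarrow> int (sdim V E) \<le> \<lfloor>real (card V) / 2\<rfloor>)
       \<and> (int (sdim V E) \<ge> \<lceil>real (card V) / 2\<rceil> + 1 \<longrightarrow> outcome_B V E)"
proof -
  have fV: "finite V" using assms(1) by (simp add: connected_graph_def graph_def)
  have fl: "\<lfloor>real (card V) / 2\<rfloor> = int (card V div 2)"
    by (metis floor_divide_of_nat_eq of_nat_numeral of_int_of_nat_eq)
  have cl: "\<lceil>real (card V) / 2\<rceil> = int ((card V + 1) div 2)"
  proof -
    have "\<lceil>real (card V) / 2\<rceil> = - \<lfloor>- real (card V) / 2\<rfloor>" by (simp add: ceiling_def)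
    also have "\<lfloor>- real (card V) / 2\<rfloor> = - int (card V) div 2"
      by (metis floor_divide_of_int_eq of_int_minus of_int_numeral of_int_of_nat_eq)
    finally show ?thesis by linarith
  qed
  show ?thesis
  proof (intro conjI impI)
    assume "outcome_M V E"
    hence "maker_wins V E False {} {}" by (simp add: outcome_M_def)
    then obtain S where "strong_resolving V E S" "2 * card S \<le> card V"
      using maker_inv[of V E False "{}" "{}"] fV by auto
    hence "sdim V E \<le> card V div 2" using sdim_le[OF fV] by fastforce
    thus "int (sdim V E) \<le> \<lfloor>real (card V) / 2\<rfloor>" unfolding fl by simp
  next
    assume "int (sdim V E) \<ge> \<lceil>real (card V) / 2\<rceil> + 1"
    hence h: "(card V + 1) div 2 < sdim V E" unfolding cl by simp
    have "breaker_wins V E True {} {}"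
      using breaker_inv[of V "{}" "{}" "card V" True E] fV h by simp
    moreover have "breaker_wins V E False {} {}"
      using breaker_inv[of V "{}" "{}" "card V" False E] fV h by simp
    ultimately show "outcome_B V E" by (simp add: outcome_B_def)
  qed
qed

end
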